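(* For $t\ge 0$ let $T_t:=e^{t(x\partial_x)^3}:\mathbb{R}[x]_{\leq 4}\to\mathbb{R}[x]_{\leq 4}$, i.e. $a_0+a_1x+a_2x^2+a_3x^3+a_4x^4\mapsto a_0+a_1e^tx+a_2e^{8t}x^2+a_3e^{27t}x^3+a_4e^{64t}x^4$. Then there exists a constant $\tau\in\mathbb{R}$ with $1.19688\cdot 10^{-2}<\tau<1.19689\cdot 10^{-2}$ such that (i) $T_t$ is not a positivity preserver for any $t\in(0,\tau)$, and (ii) $T_t$ is a positivity preserver for $t=0$ and for all $t\geq\tau$. In particular $(e^{t(x\partial_x)^3})_{t\ge0}$ on $\mathbb{R}[x]_{\le 4}$ is an eventually positive semi-group.
   Context: $\mathbb{R}[x]_{\le 4}$ denotes real univariate polynomials of degree at most $4$. Here "$T_t$ is a positivity preserver" means $T_t$ maps every polynomial $p\in\mathbb{R}[x]_{\le 4}$ with $p\ge 0$ on $\mathbb{R}$ to a polynomial that is $\ge 0$ on $\mathbb{R}$. A semi-group $(e^{tA})_{t\ge0}$ is called eventually positive if $e^{tA}$ is positive for all $t\ge\tau$ for some $\tau>0$ but not for $t\in(0,\tau)$. *)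

theory Defs
  imports Complex_Main "HOL-Computational_Algebra.Polynomial"
begin

definition T :: "real \<Rightarrow> real poly \<Rightarrow> real poly" where
  "T t p = (\<Sum>k\<le>4. monom (exp (t * real k ^ 3) * coeff p k) k)"

definition nonneg_poly :: "real poly \<Rightarrow> bool" where
  "nonneg_poly p \<longleftrightarrow> (\<forall>x::real. poly p x \<ge> 0)"

definition positivity_preserver :: "real \<Rightarrow> bool" where
  "positivity_preserver t \<longleftrightarrow>
     (\<forall>p. degree p \<le> 4 \<longrightarrow> nonneg_poly p \<longrightarrow> nonneg_poly (T t p))"

definition eventually_positive_sg :: "(real \<Rightarrow> bool) \<Rightarrow> bool" where
  "eventually_positive_sg P \<longleftrightarrow>
     (\<exists>\<tau>>0. (\<forall>t\<ge>\<tau>. P t) \<and> (\<forall>t. 0 < t \<and> t < \<tau> \<longrightarrow> \<not> P t))"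

end

theory Submission imports Defs begin

lemma inv_pow_0: "n > 0 \<Longrightarrow> ((\<lambda>x::real. k / x^n) \<longlongrightarrow> 0) at_top"
  by (intro tendsto_divide_0[OF tendsto_const] filterlim_at_top_imp_at_infinity
      filterlim_pow_at_top filterlim_ident)

lemma lim_nonneg:
  fixes f :: "real \<Rightarrow> real"
  assumes "\<forall>x\<ge>1. f x \<ge> 0" "((\<lambda>x. f x / x^n) \<longlongrightarrow> l) at_top"
  shows "l \<ge> 0"
proof (rule tendsto_lowerbound[OF assms(2)])
  show "\<forall>\<^sub>F x in at_top. 0 \<le> f x / x ^ n"
    using eventually_ge_at_top[of 1] by eventually_elim (use assms(1) in auto)
qed simp

lemma L4: "((\<lambda>x::real. (a*x^4+b*x^3+c*x^2+d*x+e)/x^4) \<longlongrightarrow> a) at_top"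
proof -
  have "((\<lambda>x::real. a + b/x^1 + c/x^2 + d/x^3 + e/x^4) \<longlongrightarrow> a + 0 + 0 + 0 + 0) at_top"
    by (intro tendsto_intros inv_pow_0) auto
  moreover have "\<forall>\<^sub>F x in at_top. a + b/x^1 + c/x^2 + d/x^3 + e/x^4 = (a*x^4+b*x^3+c*x^2+d*x+e)/x^4"
    using eventually_gt_at_top[of 0] by eventually_elim (simp add: field_simps power_eq_if)
  ultimately show ?thesis by (simp add: tendsto_cong)
qed

lemma L3: "((\<lambda>x::real. (b*x^3+c*x^2+d*x+e)/x^3) \<longlongrightarrow> b) at_top"
proof -
  have "((\<lambda>x::real. b + c/x^1 + d/x^2 + e/x^3) \<longlongrightarrow> b + 0 + 0 + 0) at_top"
    by (intro tendsto_intros inv_pow_0) auto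
  moreover have "\<forall>\<^sub>F x in at_top. b + c/x^1 + d/x^2 + e/x^3 = (b*x^3+c*x^2+d*x+e)/x^3"
    using eventually_gt_at_top[of 0] by eventually_elim (simp add: field_simps power_eq_if)
  ultimately show ?thesis by (simp add: tendsto_cong)
qed

lemma L2: "((\<lambda>x::real. (c*x^2+d*x+e)/x^2) \<longlongrightarrow> c) at_top"
proof -
  have "((\<lambda>x::real. c + d/x^1 + e/x^2) \<longlongrightarrow> c + 0 + 0) at_top"
    by (intro tendsto_intros inv_pow_0) auto
  moreover have "\<forall>\<^sub>F x in at_top. c + d/x^1 + e/x^2 = (c*x^2+d*x+e)/x^2"
    using eventually_gt_at_top[of 0] by eventually_elim (simp add: field_simps power_eq_if)
  ultimately show ?thesis by (simp add: tendsto_cong)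
qed

lemma L1: "((\<lambda>x::real. (d*x+e)/x^1) \<longlongrightarrow> d) at_top"
proof -
  have "((\<lambda>x::real. d + e/x^1) \<longlongrightarrow> d + 0) at_top"
    by (intro tendsto_intros inv_pow_0) auto
  moreover have "\<forall>\<^sub>F x in at_top. d + e/x^1 = (d*x+e)/x^1"
    using eventually_gt_at_top[of 0] by eventually_elim (simp add: field_simps)
  ultimately show ?thesis by (simp add: tendsto_cong)
qed

definition Qf :: "(nat \<Rightarrow> real) \<Rightarrow> real \<Rightarrow> real \<Rightarrow> real \<Rightarrow> real" where
  "Qf \<mu> u0 u1 u2 = \<mu> 0*u0^2 + 2*\<mu> 1*u0*u1 + \<mu> 2*(u1^2+2*u0*u2) + 2*\<mu> 3*u1*u2 + \<mu> 4*u2^2"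

lemma K_main:
  fixes a b c d e :: real
  assumes psd: "\<forall>u0 u1 u2. Qf \<mu> u0 u1 u2 \<ge> 0"
    and nn: "\<forall>x. a*x^4+b*x^3+c*x^2+d*x+e \<ge> 0" and apos: "a > 0"
  shows "\<mu> 4*a + \<mu> 3*b + \<mu> 2*c + \<mu> 1*d + \<mu> 0*e \<ge> 0"
proof -
  define P where "P x = a*x^4+b*x^3+c*x^2+d*x+e" for x
  have mu0: "\<mu> 0 \<ge> 0" using psd[rule_format, of 1 0 0] by (simp add: Qf_def)
  have "\<forall>\<^sub>F x in at_top. 0 < (a*x^4+b*x^3+c*x^2+d*x+0)/x^4"
    using order_tendstoD(1)[OF L4[of a b c d 0] apos] by simp
  moreover have "\<forall>\<^sub>F x in at_top. (x::real) > 0" by (rule eventually_gt_at_top)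
  ultimately have "\<forall>\<^sub>F x in at_top. P x \<ge> e"
  proof eventually_elim
    case (elim x) then show ?case by (simp add: P_def zero_less_divide_iff)
  qed
  then obtain N1 where N1: "\<And>x. x \<ge> N1 \<Longrightarrow> P x \<ge> e" by (auto simp: eventually_at_top_linorder)
  have "\<forall>\<^sub>F x in at_top. 0 < (a*x^4+(-b)*x^3+c*x^2+(-d)*x+0)/x^4"
    using order_tendstoD(1)[OF L4[of a "-b" c "-d" 0] apos] by simp
  moreover have "\<forall>\<^sub>F x in at_top. (x::real) > 0" by (rule eventually_gt_at_top)
  ultimately have "\<forall>\<^sub>F x in at_top. P (-x) \<ge> e"
  proof eventually_elim
    case (elim x) then show ?case by (simp add: P_def zero_less_divide_iff)
  qed
  then obtain N2 where N2: "\<And>x. x \<ge> N2 \<Longrightarrow> P (-x) \<ge> e" by (auto simp: eventually_at_top_linorder)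
  define R where "R = max (max N1 N2) 0"
  have cP: "continuous_on {-R..R} P" unfolding P_def by (intro continuous_intros)
  obtain x0 where x0: "x0 \<in> {-R..R}" "\<And>y. y \<in> {-R..R} \<Longrightarrow> P x0 \<le> P y"
    using continuous_attains_inf[OF compact_Icc _ cP] R_def by fastforce
  have glob: "P x0 \<le> P y" for y
  proof (cases "y \<in> {-R..R}")
    case True then show ?thesis using x0 by auto
  next
    case False
    have "P x0 \<le> P 0" using x0(2)[of 0] R_def by auto
    also have "P 0 = e" by (simp add: P_def)
    also have "e \<le> P y"
    proof (cases "y > R")
      case True then show ?thesis using N1[of y] R_def by auto
    next
      case False
      then have "y < -R" using \<open>y \<notin> {-R..R}\<close> by auto
      then show ?thesis using N2[of "-y"] R_def by auto
    qed
    finally show ?thesis .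
  qed
  have "(P has_real_derivative (4*a*x0^3+3*b*x0^2+2*c*x0+d)) (at x0)"
    unfolding P_def by (rule derivative_eq_intros refl | simp)+
  then have "4*a*x0^3+3*b*x0^2+2*c*x0+d = 0"
    by (rule DERIV_local_min[of _ _ _ 1]) (use glob in auto)
  then have d_eq: "d = -(4*a*x0^3+3*b*x0^2+2*c*x0)" by linarith
  define m where "m = P x0"
  define B where "B = b + 2*a*x0"
  define C where "C = c + 2*x0*B - a*x0^2"
  define xs where "xs = -B/(2*a)"
  define k where "k = C - B^2/(4*a)"
  have m0: "m \<ge> 0" using nn by (simp add: m_def P_def)
  have div: "P x - m = (x-x0)^2 * (a*x^2+B*x+C)" for x
    unfolding P_def m_def B_def C_def using d_eq by algebra
  have qform: "a*x^2+B*x+C = a*(x-xs)^2 + k" for x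
    unfolding xs_def k_def using apos by (simp add: field_simps power2_eq_square)
  have qnn: "a*x^2+B*x+C \<ge> 0" if "x \<noteq> x0" for x
  proof -
    have "(x-x0)^2 * (a*x^2+B*x+C) \<ge> 0" using div[of x] glob[of x] m_def by simp
    moreover have "(x-x0)^2 > 0" using that by simp
    ultimately show ?thesis by (simp add: zero_le_mult_iff)
  qed
  have k0: "k \<ge> 0"
  proof (rule ccontr)
    assume "\<not> k \<ge> 0"
    then have kn: "k < 0" by simp
    define s where "s = sqrt (-k/(2*a))"
    have s0: "s > 0" using kn apos by (simp add: s_def divide_neg_pos)
    have "s^2 = -k/(2*a)" using kn apos unfolding s_def
      by (intro real_sqrt_pow2) (simp add: divide_nonpos_pos)
    then have ss: "a*s^2 = -k/2" using apos by simp
    have q1: "a*(xs+s)^2+B*(xs+s)+C < 0" using qform[of "xs+s"] ss kn by simp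
    have q2: "a*(xs-s)^2+B*(xs-s)+C < 0" using qform[of "xs-s"] ss kn by simp
    show False
    proof (cases "xs + s = x0")
      case True
      then have "xs - s \<noteq> x0" using s0 by auto
      then show False using qnn q2 by fastforce
    next
      case False then show False using qnn q1 by fastforce
    qed
  qed
  have ident: "\<mu> 4*a + \<mu> 3*b + \<mu> 2*c + \<mu> 1*d + \<mu> 0*e
     = m * \<mu> 0 + a * Qf \<mu> (x0*xs) (-(x0+xs)) 1 + k * Qf \<mu> (-x0) 1 0"
    unfolding Qf_def m_def P_def k_def xs_def C_def B_def d_eq using apos
    by (simp add: field_simps power2_eq_square power3_eq_cube) (simp add: algebra_simps power2_eq_square power3_eq_cube power4_eq_xxxx)
  show ?thesis unfolding ident
    using psd m0 mu0 k0 apos by (intro add_nonneg_nonneg mult_nonneg_nonneg) auto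
qed


lemma K:
  fixes a b c d e :: real
  assumes psd: "\<forall>u0 u1 u2. Qf \<mu> u0 u1 u2 \<ge> 0"
    and nn: "\<forall>x. a*x^4+b*x^3+c*x^2+d*x+e \<ge> 0"
  shows "\<mu> 4*a + \<mu> 3*b + \<mu> 2*c + \<mu> 1*d + \<mu> 0*e \<ge> 0"
proof -
  have mu0: "\<mu> 0 \<ge> 0" using psd[rule_format, of 1 0 0] by (simp add: Qf_def)
  have "a \<ge> 0"
    by (rule lim_nonneg[of "\<lambda>x. a*x^4+b*x^3+c*x^2+d*x+e" 4, OF _ L4]) (use nn in auto)
  show ?thesis
  proof (cases "a > 0")
    case True then show ?thesis using K_main psd nn by blast
  next
    case False
    then have a0: "a = 0" using \<open>a \<ge> 0\<close> by simp
    have nn3: "\<forall>x. b*x^3+c*x^2+d*x+e \<ge> 0" using nn a0 by simp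
    have "b \<ge> 0"
      by (rule lim_nonneg[of "\<lambda>x. b*x^3+c*x^2+d*x+e" 3, OF _ L3]) (use nn3 in auto)
    moreover have "-b \<ge> 0"
    proof (rule lim_nonneg[of "\<lambda>x. (-b)*x^3+c*x^2+(-d)*x+e" 3, OF _ L3], intro allI impI)
      fix x :: real
      show "0 \<le> (-b)*x^3+c*x^2+(-d)*x+e" using nn3[rule_format, of "-x"] by simp
    qed
    ultimately have b0: "b = 0" by simp
    have nn2: "\<forall>x. c*x^2+d*x+e \<ge> 0" using nn3 b0 by simp
    have "c \<ge> 0"
      by (rule lim_nonneg[of "\<lambda>x. c*x^2+d*x+e" 2, OF _ L2]) (use nn2 in auto)
    show ?thesis
    proof (cases "c > 0")
      case True
      have "e - d^2/(4*c) = c*(-d/(2*c))^2 + d*(-d/(2*c)) + e" using True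
        by (simp add: field_simps power2_eq_square)
      then have k0: "e - d^2/(4*c) \<ge> 0" using nn2[rule_format, of "-d/(2*c)"] by linarith
      have "\<mu> 4*a + \<mu> 3*b + \<mu> 2*c + \<mu> 1*d + \<mu> 0*e = c * Qf \<mu> (d/(2*c)) 1 0 + (e - d^2/(4*c)) * \<mu> 0"
        using True a0 b0 by (simp add: Qf_def field_simps power2_eq_square)
      also have "\<dots> \<ge> 0" using psd k0 mu0 True by (intro add_nonneg_nonneg mult_nonneg_nonneg) auto
      finally show ?thesis .
    next
      case False
      then have c0: "c = 0" using \<open>c \<ge> 0\<close> by simp
      have nn1: "\<forall>x. d*x+e \<ge> 0" using nn2 c0 by simp
      have "d \<ge> 0"
        by (rule lim_nonneg[of "\<lambda>x. d*x+e" 1, OF _ L1]) (use nn1 in auto)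
      moreover have "-d \<ge> 0"
      proof (rule lim_nonneg[of "\<lambda>x. (-d)*x+e" 1, OF _ L1], intro allI impI)
        fix x :: real
        show "0 \<le> (-d)*x+e" using nn1[rule_format, of "-x"] by simp
      qed
      ultimately have "d = 0" by simp
      moreover have "e \<ge> 0" using nn1[rule_format, of 0] by simp
      ultimately show ?thesis using a0 b0 c0 mu0 by simp
    qed
  qed
qed


lemma poly4:
  fixes p :: "real poly"
  assumes "degree p \<le> 4"
  shows "poly p x = coeff p 4 * x^4 + coeff p 3 * x^3 + coeff p 2 * x^2 + coeff p 1 * x + coeff p 0"
proof -
  have "poly p x = (\<Sum>i\<le>degree p. coeff p i * x ^ i)" by (rule poly_altdef)
  also have "\<dots> = (\<Sum>i\<le>4. coeff p i * x ^ i)"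
    by (rule sum.mono_neutral_left) (use assms in \<open>auto simp: coeff_eq_0\<close>)
  also have "\<dots> = coeff p 4 * x^4 + coeff p 3 * x^3 + coeff p 2 * x^2 + coeff p 1 * x + coeff p 0"
    by (simp add: eval_nat_numeral)
  finally show ?thesis .
qed

definition lam :: "real \<Rightarrow> nat \<Rightarrow> real" where "lam t k = exp (t * real k ^ 3)"

lemma polyT:
  "poly (T t p) y = lam t 4 * coeff p 4 * y^4 + lam t 3 * coeff p 3 * y^3
    + lam t 2 * coeff p 2 * y^2 + lam t 1 * coeff p 1 * y + lam t 0 * coeff p 0"
proof -
  have "poly (T t p) y = (\<Sum>k\<le>4. lam t k * coeff p k * y^k)"
    unfolding T_def lam_def by (simp add: poly_sum poly_monom)
  also have "\<dots> = lam t 4 * coeff p 4 * y^4 + lam t 3 * coeff p 3 * y^3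
    + lam t 2 * coeff p 2 * y^2 + lam t 1 * coeff p 1 * y + lam t 0 * coeff p 0"
    by (simp add: eval_nat_numeral atMost_Suc algebra_simps)
  finally show ?thesis .
qed

lemma pres:
  assumes "\<forall>u0 u1 u2. Qf (lam t) u0 u1 u2 \<ge> 0"
  shows "positivity_preserver t"
  unfolding positivity_preserver_def nonneg_poly_def
proof (intro allI impI)
  fix p :: "real poly" and y :: real
  assume dp: "degree p \<le> 4" and nn: "\<forall>x. 0 \<le> poly p x"
  define \<mu> where "\<mu> k = lam t k * y^k" for k
  have psd: "\<forall>u0 u1 u2. Qf \<mu> u0 u1 u2 \<ge> 0"
  proof (intro allI)
    fix u0 u1 u2
    have "Qf \<mu> u0 u1 u2 = Qf (lam t) u0 (u1*y) (u2*y^2)"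
      by (simp add: Qf_def \<mu>_def algebra_simps power2_eq_square power3_eq_cube power4_eq_xxxx)
    then show "Qf \<mu> u0 u1 u2 \<ge> 0" using assms lam_def by simp
  qed
  have "\<forall>x. coeff p 4 * x^4 + coeff p 3 * x^3 + coeff p 2 * x^2 + coeff p 1 * x + coeff p 0 \<ge> 0"
    using nn poly4[OF dp] by simp
  from K[OF psd this] show "0 \<le> poly (T t p) y"
    unfolding polyT \<mu>_def lam_def by (simp add: algebra_simps)
qed

lemma square_poly:
  fixes v0 v1 v2 :: real
  defines "p \<equiv> [:v0^2, 2*v0*v1, v1^2+2*v0*v2, 2*v1*v2, v2^2:]"
  shows "degree p \<le> 4" "poly p x = (v0 + v1*x + v2*x^2)^2"
    "coeff p 0 = v0^2" "coeff p 1 = 2*v0*v1" "coeff p 2 = v1^2+2*v0*v2"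
    "coeff p 3 = 2*v1*v2" "coeff p 4 = v2^2"
  unfolding p_def
  by (auto intro!: degree_le simp: coeff_pCons split: nat.splits) (simp_all add: algebra_simps power2_eq_square)

lemma nonpres:
  assumes "Qf (lam t) v0 v1 v2 < 0"
  shows "\<not> positivity_preserver t"
proof
  assume pp: "positivity_preserver t"
  define p where "p = [:v0^2, 2*v0*v1, v1^2+2*v0*v2, 2*v1*v2, v2^2:]"
  have "degree p \<le> 4" "nonneg_poly p" using square_poly unfolding p_def nonneg_poly_def by auto
  then have "poly (T t p) 1 \<ge> 0" using pp unfolding positivity_preserver_def nonneg_poly_def by blast
  moreover have "poly (T t p) 1 = Qf (lam t) v0 v1 v2"
    unfolding polyT p_def using square_poly unfolding p_def Qf_def by (simp add: algebra_simps power2_eq_square)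
  ultimately show False using assms by simp
qed


lemma exp_upper:
  fixes x :: real assumes "0 \<le> x" "x \<le> 1"
  shows "exp x \<le> 1 + x + x^2/2 + x^3/6 + x^4/24 + x^5/120 + 3*x^6/720"
proof -
  obtain \<xi> where xi: "\<bar>\<xi>\<bar> \<le> \<bar>x\<bar>" "exp x = (\<Sum>m<6. x^m / fact m) + (exp \<xi> / fact 6) * x^6"
    using Maclaurin_exp_le[of x 6] by blast
  have "\<xi> \<le> 1" using xi(1) assms by (simp add: abs_le_iff)
  then have "exp \<xi> \<le> exp 1" by simp
  then have "exp \<xi> \<le> 3" using exp_le by linarith
  then have "(exp \<xi> / fact 6) * x^6 \<le> (3 / fact 6) * x^6"
    by (intro mult_right_mono divide_right_mono) auto
  then show ?thesis using xi(2) by (simp add: eval_nat_numeral fact_numeral)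
qed

lemma exp_lower:
  fixes x :: real assumes "0 \<le> x"
  shows "1 + x + x^2/2 + x^3/6 + x^4/24 + x^5/120 \<le> exp x"
proof -
  obtain \<xi> where xi: "\<bar>\<xi>\<bar> \<le> \<bar>x\<bar>" "exp x = (\<Sum>m<6. x^m / fact m) + (exp \<xi> / fact 6) * x^6"
    using Maclaurin_exp_le[of x 6] by blast
  have "(exp \<xi> / fact 6) * x^6 \<ge> 0" by simp
  then show ?thesis using xi(2) by (simp add: eval_nat_numeral fact_numeral)
qed

lemma E1: "exp (0.0718128::real) < 10744545/10^7"
proof -
  have "exp (0.0718128::real) \<le> 1 + 0.0718128 + 0.0718128^2/2 + 0.0718128^3/6 + 0.0718128^4/24 + 0.0718128^5/120 + 3*0.0718128^6/720"
    by (rule exp_upper) auto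
  also have "\<dots> < 10744545/10^7" by (simp add: power_divide)
  finally show ?thesis .
qed

lemma E2: "10744547/10^7 < exp (0.0718134::real)"
proof -
  have "(10744547/10^7::real) < 1 + 0.0718134 + 0.0718134^2/2 + 0.0718134^3/6 + 0.0718134^4/24 + 0.0718134^5/120"
    by (simp add: power_divide)
  also have "\<dots> \<le> exp (0.0718134::real)"
    by (rule exp_lower) auto
  finally show ?thesis .
qed

definition hp :: "real \<Rightarrow> real" where "hp y = y^6+y^5+y^4-y^2-2*y-1"

lemma hp_shift: "hp (1+u) = -1 + 11*u + 30*u^2 + 34*u^3 + 21*u^4 + 7*u^5 + u^6"
  unfolding hp_def by algebra

lemma hp_mono: assumes "1 \<le> y" "y < w" shows "hp y < hp w"
proof -
  define u where "u = y - 1"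
  define v where "v = w - 1"
  have uv: "0 \<le> u" "u < v" using assms u_def v_def by auto
  have "u^k \<le> v^k" for k by (rule power_mono) (use uv in auto)
  then have "-1 + 11*u + 30*u^2 + 34*u^3 + 21*u^4 + 7*u^5 + u^6 < -1 + 11*v + 30*v^2 + 34*v^3 + 21*v^4 + 7*v^5 + v^6"
    using uv by (smt (verit))
  then show ?thesis using hp_shift[of u] hp_shift[of v] u_def v_def by simp
qed

lemma hp_r1: "hp (10744545/10^7) < 0" by (simp add: hp_def power_divide)
lemma hp_r2: "hp (10744547/10^7) > 0" by (simp add: hp_def power_divide)


lemma ldl:
  assumes "\<mu> 0 = 1" "m2 > 0" "m2 = \<mu> 2 - \<mu> 1^2"
  shows "Qf \<mu> u0 u1 u2 = (u0 + \<mu> 1*u1 + \<mu> 2*u2)^2 + m2*(u1 + (\<mu> 3 - \<mu> 1*\<mu> 2)/m2*u2)^2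
     + ((m2*(\<mu> 4 - \<mu> 2^2) - (\<mu> 3 - \<mu> 1*\<mu> 2)^2)/m2)*u2^2"
proof -
  have e: "\<mu> 2 = m2 + \<mu> 1^2" using assms(3) by simp
  show ?thesis using assms(2) unfolding Qf_def assms(1) e
    by (simp add: field_simps power2_eq_square)
qed

lemma psd3:
  assumes "\<mu> 0 = 1" "\<mu> 2 - \<mu> 1^2 > 0" "(\<mu> 2 - \<mu> 1^2)*(\<mu> 4 - \<mu> 2^2) - (\<mu> 3 - \<mu> 1*\<mu> 2)^2 \<ge> 0"
  shows "Qf \<mu> u0 u1 u2 \<ge> 0"
  unfolding ldl[OF assms(1,2) refl] using assms(2,3)
  by (intro add_nonneg_nonneg mult_nonneg_nonneg divide_nonneg_pos) auto

lemma vec3: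
  assumes "\<mu> 0 = 1"
  shows "Qf \<mu> (-(\<mu> 1*(-(\<mu> 3 - \<mu> 1*\<mu> 2)) + \<mu> 2*(\<mu> 2 - \<mu> 1^2))) (-(\<mu> 3 - \<mu> 1*\<mu> 2)) (\<mu> 2 - \<mu> 1^2)
    = (\<mu> 2 - \<mu> 1^2) * ((\<mu> 2 - \<mu> 1^2)*(\<mu> 4 - \<mu> 2^2) - (\<mu> 3 - \<mu> 1*\<mu> 2)^2)"
  using assms unfolding Qf_def by algebra

lemma lam_pow: "lam t k = exp t ^ (k^3)"
  unfolding lam_def by (simp add: exp_of_nat_mult[symmetric] mult.commute)

lemma Dz: "((z::real)^8 - z^2)*(z^64 - (z^8)^2) - (z^27 - z*z^8)^2 = z^24 * (z^6-1)^2 * hp (z^6)"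
  unfolding hp_def by algebra

lemma z6: "exp (t::real) ^ 6 = exp (6*t)"
  using exp_of_nat_mult[of 6 t] by simp

lemma m2pos: "(t::real) > 0 \<Longrightarrow> exp t ^ 8 - exp t ^ 2 > 0"
  using power_strict_increasing[of 2 8 "exp t"] by simp


lemma Qf_lam: "Qf (lam t) u0 u1 u2 = Qf (\<lambda>k. exp t ^ (k^3)) u0 u1 u2"
proof -
  have "lam t = (\<lambda>k. exp t ^ (k^3))" by (rule ext) (rule lam_pow)
  then show ?thesis by simp
qed

lemma D_eq: "let \<mu> = (\<lambda>k. exp (t::real) ^ (k^3)) in
   (\<mu> 2 - \<mu> 1^2)*(\<mu> 4 - \<mu> 2^2) - (\<mu> 3 - \<mu> 1*\<mu> 2)^2 = exp t ^ 24 * (exp (6*t) - 1)^2 * hp (exp (6*t))"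
  using Dz[of "exp t"] by (simp add: z6 power2_eq_square)

theorem proposition6p1:
  shows "\<exists>\<tau>::real. 0.0119688 < \<tau> \<and> \<tau> < 0.0119689
     \<and> (\<forall>t. 0 < t \<and> t < \<tau> \<longrightarrow> \<not> positivity_preserver t)
     \<and> positivity_preserver 0
     \<and> (\<forall>t\<ge>\<tau>. positivity_preserver t)
     \<and> eventually_positive_sg positivity_preserver"
proof -
  define r1 :: real where "r1 = 10744545/10^7"
  define r2 :: real where "r2 = 10744547/10^7"
  have "\<exists>y\<ge>r1. y \<le> r2 \<and> hp y = 0"
    by (rule IVT) (use hp_r1 hp_r2 in \<open>auto simp: r1_def r2_def hp_def intro!: continuous_intros\<close>)
  then obtain y0 where y0: "r1 \<le> y0" "y0 \<le> r2" "hp y0 = 0" by blast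
  have h1: "hp r1 < 0" unfolding r1_def by (rule hp_r1)
  have h2: "hp r2 > 0" unfolding r2_def by (rule hp_r2)
  have "y0 \<noteq> r1" "y0 \<noteq> r2" using h1 h2 y0(3) by auto
  then have y0s: "r1 < y0" "y0 < r2" using y0 by auto
  define \<tau> where "\<tau> = ln y0 / 6"
  have y0pos: "y0 > 1" using y0s by (simp add: r1_def)
  have e\<tau>: "exp (6*\<tau>) = y0" using y0pos by (simp add: \<tau>_def)
  have "exp (0.0718128) < exp (6*\<tau>)" using E1 y0s e\<tau> r1_def by simp
  then have lo: "0.0119688 < \<tau>" by simp
  have "exp (6*\<tau>) < exp (0.0718134)" using E2 y0s e\<tau> r2_def by simp
  then have hi: "\<tau> < 0.0119689" by simp
  have neg: "\<not> positivity_preserver t" if t: "0 < t" "t < \<tau>" for t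
  proof -
    define \<mu> where "\<mu> = (\<lambda>k. exp (t::real) ^ (k^3))"
    have "exp (6*t) < y0" using t e\<tau> by (metis exp_less_cancel_iff mult_less_cancel_left_pos zero_less_numeral)
    moreover have "1 < exp (6*t)" using t by simp
    ultimately have "hp (exp (6*t)) < hp y0" by (intro hp_mono) auto
    then have "hp (exp (6*t)) < 0" using y0 by simp
    moreover have "exp t ^ 24 * (exp (6*t) - 1)^2 > 0" using t by simp
    ultimately have D: "(\<mu> 2 - \<mu> 1^2)*(\<mu> 4 - \<mu> 2^2) - (\<mu> 3 - \<mu> 1*\<mu> 2)^2 < 0"
      using D_eq[of t] unfolding \<mu>_def Let_def by (simp add: mult_pos_neg)
    have m2: "\<mu> 2 - \<mu> 1^2 > 0" using m2pos[OF t(1)] by (simp add: \<mu>_def power2_eq_square)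
    have \<mu>0: "\<mu> 0 = 1" by (simp add: \<mu>_def)
    have "Qf \<mu> (-(\<mu> 1*(-(\<mu> 3 - \<mu> 1*\<mu> 2)) + \<mu> 2*(\<mu> 2 - \<mu> 1^2))) (-(\<mu> 3 - \<mu> 1*\<mu> 2)) (\<mu> 2 - \<mu> 1^2) < 0"
      unfolding vec3[of \<mu>, OF \<mu>0] using D m2 by (simp add: mult_pos_neg)
    then show ?thesis by (intro nonpres) (simp add: Qf_lam \<mu>_def)
  qed
  have pos0: "positivity_preserver 0"
  proof (rule pres, intro allI)
    fix u0 u1 u2 :: real
    have "Qf (lam 0) u0 u1 u2 = (u0+u1+u2)^2" by (simp add: Qf_def lam_def power2_eq_square algebra_simps)
    then show "Qf (lam 0) u0 u1 u2 \<ge> 0" by simp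
  qed
  have pos: "positivity_preserver t" if t: "t \<ge> \<tau>" for t
  proof -
    define \<mu> where "\<mu> = (\<lambda>k. exp (t::real) ^ (k^3))"
    have tpos: "t > 0" using t lo by simp
    have "exp (6*\<tau>) \<le> exp (6*t)" using t by simp
    then have "y0 \<le> exp (6*t)" using e\<tau> by simp
    then have "hp y0 \<le> hp (exp (6*t))" using y0pos hp_mono[of y0 "exp (6*t)"] by (cases "y0 = exp (6*t)") auto
    then have "hp (exp (6*t)) \<ge> 0" using y0 by simp
    then have D: "(\<mu> 2 - \<mu> 1^2)*(\<mu> 4 - \<mu> 2^2) - (\<mu> 3 - \<mu> 1*\<mu> 2)^2 \<ge> 0"
      using D_eq[of t] unfolding \<mu>_def Let_def by simp
    have m2: "\<mu> 2 - \<mu> 1^2 > 0" using m2pos[OF tpos] by (simp add: \<mu>_def power2_eq_square)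
    show ?thesis
    proof (rule pres, intro allI)
      fix u0 u1 u2
      have "Qf \<mu> u0 u1 u2 \<ge> 0" by (rule psd3) (use D m2 in \<open>auto simp: \<mu>_def\<close>)
      then show "Qf (lam t) u0 u1 u2 \<ge> 0" by (simp add: Qf_lam \<mu>_def)
    qed
  qed
  have "eventually_positive_sg positivity_preserver"
    unfolding eventually_positive_sg_def using lo neg pos by (intro exI[of _ \<tau>]) auto
  then show ?thesis using lo hi neg pos0 pos by blast
qed

end
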